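(* Let $\mathrm{S}$ be a semicopula. Suppose that for every measurable space $(X,\mathcal{A})$, every capacity $\mu$ on $\mathcal{A}$, every $\mathcal{A}$-measurable $f\colon X\to[0,1]$ and every $a\in[0,1]$, $$\mathbf{I}_{\mathrm{S}}\big(\mu,\mathrm{S}(a,f)\big)=\mathrm{S}\big(a,\mathbf{I}_{\mathrm{S}}(\mu,f)\big),$$ where $\mathrm{S}(a,f)$ denotes the function $x\mapsto \mathrm{S}(a,f(x))$. Then $\mathrm{S}$ is associative, i.e. $\mathrm{S}(\mathrm{S}(x,y),z)=\mathrm{S}(x,\mathrm{S}(y,z))$ for all $x,y,z\in[0,1]$, and for each $a\in(0,1)$ the function $[0,1]\ni x\mapsto \mathrm{S}(a,x)$ is continuous.
   Context: A semicopula is a function $\mathrm{S}\colon[0,1]^2\to[0,1]$ that is non-decreasing in each coordinate and has neutral element $1$, i.e. $\mathrm{S}(x,1)=\mathrm{S}(1,x)=x$ for all $x\in[0,1]$. For a measurable space $(X,\mathcal{A})$ (with $X$ nonempty and $\mathcal{A}$ a $\sigma$-algebra), a capacity on $\mathcal{A}$ is a non-decreasing set function $\mu\colon\mathcal{A}\to[0,1]$ with $\mu(\emptyset)=0$ and $\mu(X)=1$. For a capacity $\mu$ and an $\mathcal{A}$-measurable $f\colon X\to[0,1]$, the generalized Sugeno integral is $$\mathbf{I}_{\mathrm{S}}(\mu,f)=\sup_{t\in[0,1]}\mathrm{S}\big(t,\mu(\{x\in X: f(x)\ge t\})\big).$$ *)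

theory Defs
  imports "HOL-Analysis.Analysis"
begin

definition semicopula :: "(real \<Rightarrow> real \<Rightarrow> real) \<Rightarrow> bool" where
  "semicopula S \<longleftrightarrow>
     (\<forall>x\<in>{0..1}. \<forall>y\<in>{0..1}. S x y \<in> {0..1}) \<and>
     (\<forall>x1\<in>{0..1}. \<forall>x2\<in>{0..1}. \<forall>y\<in>{0..1}. x1 \<le> x2 \<longrightarrow> S x1 y \<le> S x2 y) \<and>
     (\<forall>x\<in>{0..1}. \<forall>y1\<in>{0..1}. \<forall>y2\<in>{0..1}. y1 \<le> y2 \<longrightarrow> S x y1 \<le> S x y2) \<and>
     (\<forall>x\<in>{0..1}. S x 1 = x \<and> S 1 x = x)"

text \<open>Capacity on the sigma-algebra of a measurable space M (only its values on sets M matter).\<close>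
definition capacity :: "'a measure \<Rightarrow> ('a set \<Rightarrow> real) \<Rightarrow> bool" where
  "capacity M \<mu> \<longleftrightarrow>
     (\<forall>A\<in>sets M. \<mu> A \<in> {0..1}) \<and> \<mu> {} = 0 \<and> \<mu> (space M) = 1 \<and>
     (\<forall>A\<in>sets M. \<forall>B\<in>sets M. A \<subseteq> B \<longrightarrow> \<mu> A \<le> \<mu> B)"

definition gen_sugeno ::
  "(real \<Rightarrow> real \<Rightarrow> real) \<Rightarrow> 'a measure \<Rightarrow> ('a set \<Rightarrow> real) \<Rightarrow> ('a \<Rightarrow> real) \<Rightarrow> real" where
  "gen_sugeno S M \<mu> f = (SUP t\<in>{0..1}. S t (\<mu> {x\<in>space M. t \<le> f x}))"

end

theory Submission
  imports Defs
begin

lemma sc_range: "semicopula S \<Longrightarrow> x \<in> {0..1} \<Longrightarrow> y \<in> {0..1} \<Longrightarrow> 0 \<le> S x y \<and> S x y \<le> 1"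
  unfolding semicopula_def by auto

lemma sc_mono1: "semicopula S \<Longrightarrow> x1 \<in> {0..1} \<Longrightarrow> x2 \<in> {0..1} \<Longrightarrow> y \<in> {0..1} \<Longrightarrow> x1 \<le> x2 \<Longrightarrow> S x1 y \<le> S x2 y"
  unfolding semicopula_def by auto

lemma sc_mono2: "semicopula S \<Longrightarrow> x \<in> {0..1} \<Longrightarrow> y1 \<in> {0..1} \<Longrightarrow> y2 \<in> {0..1} \<Longrightarrow> y1 \<le> y2 \<Longrightarrow> S x y1 \<le> S x y2"
  unfolding semicopula_def by auto

lemma sc_one1: "semicopula S \<Longrightarrow> x \<in> {0..1} \<Longrightarrow> S x 1 = x"
  unfolding semicopula_def by auto

lemma sc_one2: "semicopula S \<Longrightarrow> x \<in> {0..1} \<Longrightarrow> S 1 x = x"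
  unfolding semicopula_def by auto

lemma sc_zero1: "semicopula S \<Longrightarrow> x \<in> {0..1} \<Longrightarrow> S x 0 = 0"
proof -
  assume s: "semicopula S" and x: "x \<in> {0..1}"
  have "S x 0 \<le> S 1 0" using sc_mono1[OF s x, of 1 0] x by auto
  also have "\<dots> = 0" using sc_one2[OF s, of 0] by simp
  finally show ?thesis using sc_range[OF s x, of 0] by simp
qed

lemma sc_zero2: "semicopula S \<Longrightarrow> x \<in> {0..1} \<Longrightarrow> S 0 x = 0"
proof -
  assume s: "semicopula S" and x: "x \<in> {0..1}"
  have "S 0 x \<le> S 0 1" using sc_mono2[OF s _ x, of 0 1] x by auto
  also have "\<dots> = 0" using sc_one1[OF s, of 0] by simp
  finally show ?thesis using sc_range[OF s _ x, of 0] by simp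
qed

lemma sug_le: "(\<And>t. t \<in> {0..1} \<Longrightarrow> S t (\<mu> {x\<in>space M. t \<le> f x}) \<le> B) \<Longrightarrow> gen_sugeno S M \<mu> f \<le> B"
  unfolding gen_sugeno_def by (rule cSUP_least) auto

lemma sug_ge: "t \<in> {0..1} \<Longrightarrow> (\<And>t. t \<in> {0..1} \<Longrightarrow> S t (\<mu> {x\<in>space M. t \<le> f x}) \<le> B)
   \<Longrightarrow> S t (\<mu> {x\<in>space M. t \<le> f x}) \<le> gen_sugeno S M \<mu> f"
  unfolding gen_sugeno_def apply (rule cSUP_upper, simp)
  apply (rule bdd_aboveI2) by blast

definition mu2 :: "real \<Rightarrow> real set \<Rightarrow> real" where
  "mu2 b B = (if B = {} then 0 else if B = {0..1} then 1 else b)"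

lemma step_sugeno:
  assumes s: "semicopula S" and d: "d \<in> {0..1}" and b: "b \<in> {0..1}"
  shows "gen_sugeno S (count_space {0..1}) (mu2 b) (\<lambda>x. if x = 0 then d else 0) = S d b"
proof (rule antisym)
  have bnd: "S t (mu2 b {x\<in>space (count_space {0..1}). t \<le> (if x = 0 then d else 0)}) \<le> S d b"
    if t: "t \<in> {0..1}" for t
  proof -
    consider "t = 0" | "0 < t" "t \<le> d" | "0 < t" "d < t" using t by fastforce
    then show ?thesis
    proof cases
      case 1
      have "{x\<in>{0..1::real}. t \<le> (if x = 0 then d else 0)} = {0..1}" using 1 d by auto
      then show ?thesis using 1 sc_range[OF s d b] sc_zero2[OF s, of 1] by (simp add: mu2_def)
    next
      case 2
      have "{x\<in>{0..1::real}. t \<le> (if x = 0 then d else 0)} = {0}" using 2 d by auto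
      moreover have "{0::real} \<noteq> {0..1}" by (metis atLeastAtMost_singleton_iff zero_neq_one)
      ultimately show ?thesis using 2 sc_mono1[OF s t d b] by (simp add: mu2_def)
    next
      case 3
      have "{x\<in>{0..1::real}. t \<le> (if x = 0 then d else 0)} = {}" using 3 d by auto
      then show ?thesis using sc_range[OF s d b] sc_zero1[OF s t] by (simp add: mu2_def)
    qed
  qed
  then show "gen_sugeno S (count_space {0..1}) (mu2 b) (\<lambda>x. if x = 0 then d else 0) \<le> S d b"
    by (rule sug_le)
  show "S d b \<le> gen_sugeno S (count_space {0..1}) (mu2 b) (\<lambda>x. if x = 0 then d else 0)"
  proof (cases "d = 0")
    case True
    have "S 0 (mu2 b {x\<in>space (count_space {0..1}). 0 \<le> (if x = 0 then d else 0)}) \<le> gen_sugeno S (count_space {0..1}) (mu2 b) (\<lambda>x. if x = 0 then d else 0)"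
      using sug_ge[of 0 S "mu2 b" "count_space {0..1}" "\<lambda>x. if x = 0 then d else 0" "S d b"] bnd by auto
    moreover have "{x\<in>space (count_space {0..1::real}). 0 \<le> (if x = 0 then d else 0)} = {0..1}" using True by auto
    moreover have "S d b = S 0 (mu2 b {0..1})" using True sc_zero2[OF s b] sc_zero2[OF s, of 1] by (simp add: mu2_def)
    ultimately show ?thesis by simp
  next
    case False
    have "S d (mu2 b {x\<in>space (count_space {0..1}). d \<le> (if x = 0 then d else 0)}) \<le> gen_sugeno S (count_space {0..1}) (mu2 b) (\<lambda>x. if x = 0 then d else 0)"
      using sug_ge[of d S "mu2 b" "count_space {0..1}" "\<lambda>x. if x = 0 then d else 0" "S d b"] bnd d by auto
    moreover have "{x\<in>space (count_space {0..1::real}). d \<le> (if x = 0 then d else 0)} = {0}" using False d by auto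
    moreover have "{0::real} \<noteq> {0..1}" by (metis atLeastAtMost_singleton_iff zero_neq_one)
    then have "mu2 b {0} = b" by (simp add: mu2_def)
    ultimately show ?thesis by simp
  qed
qed

lemma assoc:
  assumes s: "semicopula S"
    and hom: "\<And>(M :: real measure) \<mu> f a.
       space M \<noteq> {} \<Longrightarrow> capacity M \<mu> \<Longrightarrow> f \<in> borel_measurable M \<Longrightarrow>
       (\<forall>x\<in>space M. f x \<in> {0..1}) \<Longrightarrow> a \<in> {0..1} \<Longrightarrow>
       gen_sugeno S M \<mu> (\<lambda>x. S a (f x)) = S a (gen_sugeno S M \<mu> f)"
    and x: "x \<in> {0..1}" and y: "y \<in> {0..1}" and z: "z \<in> {0..1}"
  shows "S (S x y) z = S x (S y z)"
proof -
  have cap: "capacity (count_space {0..1}) (mu2 z)"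
    unfolding capacity_def mu2_def using z by auto
  have fx: "(\<lambda>u. S x (if u = 0 then y else 0)) = (\<lambda>u. if u = 0 then S x y else 0)"
    using sc_zero1[OF s x] by auto
  have "gen_sugeno S (count_space {0..1}) (mu2 z) (\<lambda>u. S x (if u = 0 then y else 0))
      = S x (gen_sugeno S (count_space {0..1}) (mu2 z) (\<lambda>u. if u = 0 then y else 0))"
    by (rule hom) (use cap x y in auto)
  then show ?thesis unfolding fx
    using step_sugeno[OF s y z] step_sugeno[OF s _ z, of "S x y"] sc_range[OF s x y] by simp
qed

lemma leftc:
  assumes s: "semicopula S"
    and hom: "\<And>(M :: real measure) \<mu> f a.
       space M \<noteq> {} \<Longrightarrow> capacity M \<mu> \<Longrightarrow> f \<in> borel_measurable M \<Longrightarrow>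
       (\<forall>x\<in>space M. f x \<in> {0..1}) \<Longrightarrow> a \<in> {0..1} \<Longrightarrow>
       gen_sugeno S M \<mu> (\<lambda>x. S a (f x)) = S a (gen_sugeno S M \<mu> f)"
    and a: "a \<in> {0..1}" and x0: "0 < x0" "x0 \<le> 1" and e: "0 < e"
    and L: "\<And>y. 0 \<le> y \<Longrightarrow> y < x0 \<Longrightarrow> S a y \<le> S a x0 - e"
  shows False
proof -
  define M where "M = count_space {0..1::real}"
  define \<mu> where "\<mu> = (\<lambda>B. if \<exists>y. 0 \<le> y \<and> y < x0 \<and> {y..1} \<subseteq> B then 1 else (0::real))"
  have cap: "capacity M \<mu>"
    unfolding capacity_def \<mu>_def M_def using x0 by (auto 0 3)
  have eq: "gen_sugeno S M \<mu> (\<lambda>x. S a x) = S a (gen_sugeno S M \<mu> (\<lambda>x. x))"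
    by (rule hom) (use cap a in \<open>auto simp: M_def\<close>)
  have L0: "0 \<le> S a x0 - e" using L[of 0] x0 sc_range[OF s a, of 0] by auto
  have termb: "S t (\<mu> {x\<in>space M. t \<le> x}) \<le> 1" if "t \<in> {0..1}" for t
    using sc_range[OF s that, of 0] sc_range[OF s that, of 1] unfolding \<mu>_def by auto
  have I1: "gen_sugeno S M \<mu> (\<lambda>x. x) \<le> 1" by (rule sug_le) (rule termb)
  have I0: "0 \<le> gen_sugeno S M \<mu> (\<lambda>x. x)"
  proof -
    have "S 0 (\<mu> {x\<in>space M. 0 \<le> x}) \<le> gen_sugeno S M \<mu> (\<lambda>x. x)"
      using sug_ge[of 0 S \<mu> M "\<lambda>x. x" 1] termb by auto
    moreover have "0 \<le> S 0 (\<mu> {x\<in>space M. 0 \<le> x})"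
      using sc_range[OF s, of 0 0] sc_range[OF s, of 0 1] unfolding \<mu>_def by auto
    ultimately show ?thesis by linarith
  qed
  have Ige: "x0 \<le> gen_sugeno S M \<mu> (\<lambda>x. x)"
  proof (rule ccontr)
    assume neg: "\<not> x0 \<le> gen_sugeno S M \<mu> (\<lambda>x. x)"
    define t where "t = (gen_sugeno S M \<mu> (\<lambda>x. x) + x0) / 2"
    have t: "0 \<le> t" "t < x0" "t \<le> 1" "gen_sugeno S M \<mu> (\<lambda>x. x) < t"
      using neg I0 x0 unfolding t_def by auto
    have "\<mu> {x\<in>space M. t \<le> x} = 1"
      unfolding \<mu>_def M_def using t by (auto intro!: exI[of _ t])
    moreover have "S t (\<mu> {x\<in>space M. t \<le> x}) \<le> gen_sugeno S M \<mu> (\<lambda>x. x)"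
      using sug_ge[of t S \<mu> M "\<lambda>x. x" 1] termb t by auto
    ultimately show False using sc_one1[OF s, of t] t by auto
  qed
  have "S a x0 \<le> S a (gen_sugeno S M \<mu> (\<lambda>x. x))"
    using sc_mono2[OF s a, of x0 "gen_sugeno S M \<mu> (\<lambda>x. x)"] Ige I1 x0 by auto
  moreover have "gen_sugeno S M \<mu> (\<lambda>x. S a x) \<le> S a x0 - e"
  proof (rule sug_le)
    fix t :: real assume t: "t \<in> {0..1}"
    show "S t (\<mu> {x\<in>space M. t \<le> S a x}) \<le> S a x0 - e"
    proof (cases "\<exists>y. 0 \<le> y \<and> y < x0 \<and> {y..1} \<subseteq> {x\<in>space M. t \<le> S a x}")
      case True
      then obtain y where y: "0 \<le> y" "y < x0" "{y..1} \<subseteq> {x\<in>space M. t \<le> S a x}" by blast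
      have "y \<in> {y..1}" using y x0 by auto
      then have "t \<le> S a y" using y by auto
      then show ?thesis using True L[OF y(1,2)] sc_one1[OF s t] unfolding \<mu>_def by auto
    next
      case False
      then show ?thesis using sc_zero1[OF s t] L0 unfolding \<mu>_def by auto
    qed
  qed
  ultimately show False using eq e by auto
qed

lemma rightc:
  assumes s: "semicopula S"
    and hom: "\<And>(M :: real measure) \<mu> f a.
       space M \<noteq> {} \<Longrightarrow> capacity M \<mu> \<Longrightarrow> f \<in> borel_measurable M \<Longrightarrow>
       (\<forall>x\<in>space M. f x \<in> {0..1}) \<Longrightarrow> a \<in> {0..1} \<Longrightarrow>
       gen_sugeno S M \<mu> (\<lambda>x. S a (f x)) = S a (gen_sugeno S M \<mu> f)"
    and a: "a \<in> {0..1}" and x0: "0 \<le> x0" "x0 < 1" and e: "0 < e"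
    and R: "\<And>z. x0 < z \<Longrightarrow> z \<le> 1 \<Longrightarrow> S a x0 + e \<le> S a z"
  shows False
proof -
  define M where "M = count_space {0..1::real}"
  define \<mu> where "\<mu> = (\<lambda>B. if x0 \<in> B \<or> {x0<..1} \<subseteq> B then 1 else (0::real))"
  have cap: "capacity M \<mu>"
    unfolding capacity_def \<mu>_def M_def using x0 by (auto 0 3)
  have eq: "gen_sugeno S M \<mu> (\<lambda>x. S a x) = S a (gen_sugeno S M \<mu> (\<lambda>x. x))"
    by (rule hom) (use cap a in \<open>auto simp: M_def\<close>)
  have I0: "0 \<le> gen_sugeno S M \<mu> (\<lambda>x. x)"
  proof -
    have termb: "S t (\<mu> {x\<in>space M. t \<le> x}) \<le> 1" if "t \<in> {0..1}" for t
      using sc_range[OF s that, of 0] sc_range[OF s that, of 1] unfolding \<mu>_def by auto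
    have "S 0 (\<mu> {x\<in>space M. 0 \<le> x}) \<le> gen_sugeno S M \<mu> (\<lambda>x. x)"
      using sug_ge[of 0 S \<mu> M "\<lambda>x. x" 1] termb by auto
    moreover have "0 \<le> S 0 (\<mu> {x\<in>space M. 0 \<le> x})"
      using sc_range[OF s, of 0 0] sc_range[OF s, of 0 1] unfolding \<mu>_def by auto
    ultimately show ?thesis by linarith
  qed
  have Ile: "gen_sugeno S M \<mu> (\<lambda>x. x) \<le> x0"
  proof (rule sug_le)
    fix t :: real assume t: "t \<in> {0..1}"
    show "S t (\<mu> {x\<in>space M. t \<le> x}) \<le> x0"
    proof (cases "x0 \<in> {x\<in>space M. t \<le> x} \<or> {x0<..1} \<subseteq> {x\<in>space M. t \<le> x}")
      case True
      have "t \<le> x0"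
      proof (rule ccontr)
        assume "\<not> t \<le> x0"
        then have "(x0 + t) / 2 \<in> {x0<..1}" using t by auto
        moreover have "x0 \<notin> {x\<in>space M. t \<le> x}" using \<open>\<not> t \<le> x0\<close> by auto
        ultimately have "(x0 + t) / 2 \<in> {x\<in>space M. t \<le> x}" using True by blast
        then show False using \<open>\<not> t \<le> x0\<close> by auto
      qed
      then show ?thesis using True sc_one1[OF s t] unfolding \<mu>_def by auto
    next
      case False
      then show ?thesis using sc_zero1[OF s t] x0 unfolding \<mu>_def by auto
    qed
  qed
  have Ra: "S a x0 + e \<le> 1" using R[of 1] x0 sc_range[OF s a, of 1] by auto
  have Ra0: "0 \<le> S a x0 + e" using sc_range[OF s a, of x0] x0 e by auto
  have "S a (gen_sugeno S M \<mu> (\<lambda>x. x)) \<le> S a x0"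
    using sc_mono2[OF s a, of "gen_sugeno S M \<mu> (\<lambda>x. x)" x0] Ile I0 x0 by auto
  moreover have "S a x0 + e \<le> gen_sugeno S M \<mu> (\<lambda>x. S a x)"
  proof -
    let ?t = "S a x0 + e"
    have termb: "S t (\<mu> {x\<in>space M. t \<le> S a x}) \<le> 1" if "t \<in> {0..1}" for t
      using sc_range[OF s that, of 0] sc_range[OF s that, of 1] unfolding \<mu>_def by auto
    have "{x0<..1} \<subseteq> {x\<in>space M. ?t \<le> S a x}" using R x0 by (auto simp: M_def)
    then have "\<mu> {x\<in>space M. ?t \<le> S a x} = 1" unfolding \<mu>_def by auto
    moreover have "S ?t (\<mu> {x\<in>space M. ?t \<le> S a x}) \<le> gen_sugeno S M \<mu> (\<lambda>x. S a x)"
      using sug_ge[of ?t S \<mu> M "\<lambda>x. S a x" 1] termb Ra Ra0 by auto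
    ultimately show ?thesis using sc_one1[OF s, of ?t] Ra Ra0 by auto
  qed
  ultimately show False using eq e by auto
qed

lemma left_nb:
  assumes s: "semicopula S"
    and hom: "\<And>(M :: real measure) \<mu> f a.
       space M \<noteq> {} \<Longrightarrow> capacity M \<mu> \<Longrightarrow> f \<in> borel_measurable M \<Longrightarrow>
       (\<forall>x\<in>space M. f x \<in> {0..1}) \<Longrightarrow> a \<in> {0..1} \<Longrightarrow>
       gen_sugeno S M \<mu> (\<lambda>x. S a (f x)) = S a (gen_sugeno S M \<mu> f)"
    and a: "a \<in> {0..1}" and x: "x \<in> {0..1}" and e: "0 < e"
  shows "\<exists>y<x. \<forall>x'\<in>{0..1}. y < x' \<and> x' \<le> x \<longrightarrow> S a x - e < S a x'"
proof (cases "x = 0")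
  case True
  then show ?thesis using e by (intro exI[of _ "-1"]) auto
next
  case False
  have "\<exists>y. 0 \<le> y \<and> y < x \<and> S a x - e < S a y"
  proof (rule ccontr)
    assume neg: "\<not> (\<exists>y. 0 \<le> y \<and> y < x \<and> S a x - e < S a y)"
    show False
      by (rule leftc[OF s hom a _ _ e, of x]) (use x False neg in \<open>auto simp: not_less\<close>)
  qed
  then obtain y where y: "0 \<le> y" "y < x" "S a x - e < S a y" by blast
  show ?thesis
  proof (intro exI[of _ y] conjI ballI impI)
    fix x' :: real assume "x' \<in> {0..1}" "y < x' \<and> x' \<le> x"
    then show "S a x - e < S a x'" using sc_mono2[OF s a, of y x'] y by auto
  qed (use y in auto)
qed

lemma right_nb:
  assumes s: "semicopula S"
    and hom: "\<And>(M :: real measure) \<mu> f a.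
       space M \<noteq> {} \<Longrightarrow> capacity M \<mu> \<Longrightarrow> f \<in> borel_measurable M \<Longrightarrow>
       (\<forall>x\<in>space M. f x \<in> {0..1}) \<Longrightarrow> a \<in> {0..1} \<Longrightarrow>
       gen_sugeno S M \<mu> (\<lambda>x. S a (f x)) = S a (gen_sugeno S M \<mu> f)"
    and a: "a \<in> {0..1}" and x: "x \<in> {0..1}" and e: "0 < e"
  shows "\<exists>z>x. \<forall>x'\<in>{0..1}. x \<le> x' \<and> x' < z \<longrightarrow> S a x' < S a x + e"
proof (cases "x = 1")
  case True
  then show ?thesis using e by (intro exI[of _ "2"]) auto
next
  case False
  have "\<exists>z. x < z \<and> z \<le> 1 \<and> S a z < S a x + e"
  proof (rule ccontr)
    assume neg: "\<not> (\<exists>z. x < z \<and> z \<le> 1 \<and> S a z < S a x + e)"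
    show False
      by (rule rightc[OF s hom a _ _ e, of x]) (use x False neg in \<open>auto simp: not_less\<close>)
  qed
  then obtain z where z: "x < z" "z \<le> 1" "S a z < S a x + e" by blast
  show ?thesis
  proof (intro exI[of _ z] conjI ballI impI)
    fix x' :: real assume "x' \<in> {0..1}" "x \<le> x' \<and> x' < z"
    then show "S a x' < S a x + e" using sc_mono2[OF s a, of x' z] z by auto
  qed (use z in auto)
qed

theorem theorem1:
  fixes S :: "real \<Rightarrow> real \<Rightarrow> real"
  assumes semi: "semicopula S"
    and hom: "\<And>(M :: real measure) \<mu> f a.
       space M \<noteq> {} \<Longrightarrow> capacity M \<mu> \<Longrightarrow> f \<in> borel_measurable M \<Longrightarrow>
       (\<forall>x\<in>space M. f x \<in> {0..1}) \<Longrightarrow> a \<in> {0..1} \<Longrightarrow>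
       gen_sugeno S M \<mu> (\<lambda>x. S a (f x)) = S a (gen_sugeno S M \<mu> f)"
  shows "(\<forall>x\<in>{0..1}. \<forall>y\<in>{0..1}. \<forall>z\<in>{0..1}. S (S x y) z = S x (S y z)) \<and>
         (\<forall>a\<in>{0<..<1}. continuous_on {0..1} (S a))"
proof (intro conjI ballI)
  fix x y z :: real assume "x \<in> {0..1}" "y \<in> {0..1}" "z \<in> {0..1}"
  then show "S (S x y) z = S x (S y z)" using assoc[OF semi hom] by blast
next
  fix a :: real assume "a \<in> {0<..<1}"
  then have a: "a \<in> {0..1}" by auto
  show "continuous_on {0..1} (S a)"
    unfolding continuous_on_iff
  proof (intro ballI allI impI)
    fix x e :: real assume x: "x \<in> {0..1}" and e: "0 < e"
    obtain y where y: "y < x" "\<forall>x'\<in>{0..1}. y < x' \<and> x' \<le> x \<longrightarrow> S a x - e < S a x'"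
      using left_nb[OF semi hom a x e] by blast
    obtain z where z: "x < z" "\<forall>x'\<in>{0..1}. x \<le> x' \<and> x' < z \<longrightarrow> S a x' < S a x + e"
      using right_nb[OF semi hom a x e] by blast
    show "\<exists>d>0. \<forall>x'\<in>{0..1}. dist x' x < d \<longrightarrow> dist (S a x') (S a x) < e"
    proof (intro exI[of _ "min (x - y) (z - x)"] conjI ballI impI)
      show "0 < min (x - y) (z - x)" using y z by auto
      fix x' :: real assume x': "x' \<in> {0..1}" and d: "dist x' x < min (x - y) (z - x)"
      show "dist (S a x') (S a x) < e"
      proof (cases "x' \<le> x")
        case True
        then have "S a x - e < S a x'" using y x' d by (auto simp: dist_real_def)
        moreover have "S a x' \<le> S a x" using sc_mono2[OF semi a x' x] True by auto
        ultimately show ?thesis using e by (auto simp: dist_real_def)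
      next
        case False
        then have "S a x' < S a x + e" using z x' d by (auto simp: dist_real_def)
        moreover have "S a x \<le> S a x'" using sc_mono2[OF semi a x x'] False by auto
        ultimately show ?thesis using e by (auto simp: dist_real_def)
      qed
    qed
  qed
qed

end
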